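(* For every $n\ge 1$, there is a one-to-one correspondence between the set of relative derangements of type $B$ on $[n]$ and the set of signed skew derangements on $[n]$.
   Context: A signed permutation on $[n]=\{1,\dots,n\}$ is a word $\pi_1\cdots\pi_n$ which is an ordinary permutation of $[n]$ in which some entries carry a bar. A relative derangement of type $B$ on $[n]$ is a signed permutation $\pi_1\cdots\pi_n$ such that for every $1\le i\le n-1$, the entry $i$ is not immediately followed by $i+1$, and $\bar i$ is not immediately followed by $\overline{i+1}$. A signed set on $[n]$ is the set $[n]$ with some of its elements barred. For a signed set $X$ on $[n]$, $X-1$ denotes the set obtained by subtracting $1$ from each element, with the rule $\bar i-1=\overline{i-1}$ (so $X-1$ is a signed set on $\{0,1,\dots,n-1\}$, possibly containing $\bar 0$). A signed skew derangement on $[n]$ is a pair consisting of a signed set $X$ on $[n]$ and a bijection $f:X\to X-1$ such that $f(x)\neq x$ for all $x\in X$ (equality as signed elements). *)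

theory Defs
  imports Main "HOL-Library.FuncSet"
begin

text \<open>A signed element is a pair (i, b) with b = True meaning that i carries a bar.\<close>
type_synonym selem = "nat \<times> bool"

definition signed_perm :: "nat \<Rightarrow> selem list \<Rightarrow> bool" where
  "signed_perm n w \<longleftrightarrow> length w = n \<and> distinct (map fst w) \<and> set (map fst w) = {1..n}"

definition rel_derangement_B :: "nat \<Rightarrow> selem list \<Rightarrow> bool" where
  "rel_derangement_B n w \<longleftrightarrow> signed_perm n w \<and>
     (\<forall>j. j + 1 < length w \<longrightarrow>
        \<not> (fst (w ! (j+1)) = fst (w ! j) + 1 \<and> snd (w ! (j+1)) = snd (w ! j)))"

definition rel_derangements_B :: "nat \<Rightarrow> selem list set" where
  "rel_derangements_B n = {w. rel_derangement_B n w}"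

definition signed_set :: "nat \<Rightarrow> selem set \<Rightarrow> bool" where
  "signed_set n X \<longleftrightarrow> fst ` X = {1..n} \<and> inj_on fst X"

definition shift_down :: "selem set \<Rightarrow> selem set" where
  "shift_down X = (\<lambda>(i, b). (i - 1, b)) ` X"

text \<open>Signed skew derangements: pairs (X, f) with f : X \<rightarrow> X - 1 a bijection
  without fixed points; f is taken extensional (undefined outside X) so that the
  pair is determined by the mathematical map.\<close>
definition signed_skew_derangements :: "nat \<Rightarrow> (selem set \<times> (selem \<Rightarrow> selem)) set" where
  "signed_skew_derangements n =
     {(X, f). signed_set n X \<and> f \<in> extensional X \<and> bij_betw f X (shift_down X)
              \<and> (\<forall>x\<in>X. f x \<noteq> x)}"

end

theory Submission
  imports Defs "HOL-Combinatorics.Permutations" "HOL-Combinatorics.Multiset_Permutations"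
begin

fun G :: "nat list \<Rightarrow> nat \<Rightarrow> nat" where
  "G [] = id"
| "G (a # v) = (if (\<forall>x\<in>set v. a < x) then G v else G v \<circ> transpose (hd v) a)"

lemma G_permutes: "distinct v \<Longrightarrow> G v permutes set v"
proof (induction v)
  case Nil then show ?case using permutes_id by (simp add: id_def)
next
  case (Cons a v)
  show ?case
  proof (cases "\<forall>x\<in>set v. a < x")
    case True
    then show ?thesis using Cons by (auto intro: permutes_subset)
  next
    case False
    then have "v \<noteq> []" by auto
    then have "hd v \<in> set (a#v)" by simp
    moreover have "G v permutes set (a#v)" using Cons by (auto intro: permutes_subset)
    ultimately show ?thesis using False
      by (simp add: permutes_compose permutes_swap_id)
  qed
qed

lemma G_hd: "distinct v \<Longrightarrow> v \<noteq> [] \<Longrightarrow> G v (hd v) = Min (set v)"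
proof (induction v)
  case Nil then show ?case by simp
next
  case (Cons a v)
  have perm: "G v permutes set v" using Cons G_permutes by auto
  show ?case
  proof (cases "\<forall>x\<in>set v. a < x")
    case True
    have "G v a = a" using Cons.prems perm by (simp add: permutes_not_in)
    moreover have "Min (set (a#v)) = a" using True
      by (auto intro!: Min_eqI simp: less_imp_le)
    ultimately show ?thesis using True by simp
  next
    case False
    then have ne: "v \<noteq> []" by auto
    have "G (a#v) = G v \<circ> transpose (hd v) a" by (simp only: G.simps if_not_P[OF False])
    then have "G (a#v) a = G v (hd v)" by (simp add: transpose_def)
    also have "\<dots> = Min (set v)" using Cons ne by auto
    also have "\<dots> = Min (set (a#v))" using False ne Cons.prems
      by (auto simp: Min_insert min_def not_less)
    finally show ?thesis by simp
  qed
qed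

definition adjr :: "nat list \<Rightarrow> nat \<Rightarrow> bool" where
  "adjr v a \<longleftrightarrow> (\<exists>xs ys. v = xs @ Suc a # a # ys)"

lemma adjr_Nil[simp]: "\<not> adjr [] a" by (simp add: adjr_def)

lemma adjr_Cons: "adjr (b # v) a \<longleftrightarrow> (b = Suc a \<and> v \<noteq> [] \<and> hd v = a) \<or> adjr v a"
  unfolding adjr_def
  apply (rule iffI)
   apply (auto simp: Cons_eq_append_conv)[1]
  apply (erule disjE)
   apply (rule exI[of _ "[]"]; cases v; simp)
  apply (metis append_Cons)
  done

lemma adjr_in: "adjr v a \<Longrightarrow> a \<in> set v"
  by (auto simp: adjr_def)

lemma adjr_hd: "distinct v \<Longrightarrow> v \<noteq> [] \<Longrightarrow> \<not> adjr v (hd v)"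
  by (cases v) (auto simp: adjr_def Cons_eq_append_conv)

lemma G_adj: "distinct v \<Longrightarrow> G v a = Suc a \<longleftrightarrow> adjr v a"
proof (induction v arbitrary: a)
  case Nil then show ?case by simp
next
  case (Cons b v)
  have perm: "G v permutes set v" using Cons G_permutes by auto
  have bfix: "G v b = b" using Cons.prems perm by (simp add: permutes_not_in)
  show ?case
  proof (cases "\<forall>x\<in>set v. b < x")
    case True
    have "\<not> (b = Suc a \<and> v \<noteq> [] \<and> hd v = a)" using True
      by (metis Suc_lessD hd_in_set less_irrefl_nat)
    then show ?thesis using True Cons by (auto simp: adjr_Cons)
  next
    case False
    then have ne: "v \<noteq> []" by auto
    then obtain x where x: "x \<in> set v" "x \<le> b" using False by (auto simp: not_less)
    have bnot: "b \<notin> set v" using Cons.prems by simp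
    have Gdef: "G (b#v) = G v \<circ> transpose (hd v) b" by (simp only: G.simps if_not_P[OF False])
    show ?thesis
    proof (cases "a = hd v")
      case True
      have "G (b#v) a = b" using Gdef True bfix by (simp add: transpose_def)
      then show ?thesis using True ne adjr_hd[of v] Cons.prems by (auto simp: adjr_Cons)
    next
      case F1: False
      show ?thesis
      proof (cases "a = b")
        case True
        have "G (b#v) a = Min (set v)" using Gdef True G_hd[of v] Cons.prems ne
          by (simp add: transpose_def)
        moreover have "Min (set v) \<le> x" using x by simp
        ultimately have "G (b#v) a \<noteq> Suc a" using x(2) True by (metis Suc_n_not_le_n le_trans)
        moreover have "\<not> adjr (b#v) a" using True bnot adjr_in[of v a] by (auto simp: adjr_Cons)
        ultimately show ?thesis by simp
      next
        case False
        have "G (b#v) a = G v a" using Gdef F1 False by (simp add: transpose_def)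
        then show ?thesis using Cons F1 by (auto simp: adjr_Cons)
      qed
    qed
  qed
qed

lemma G_inj: "distinct v \<Longrightarrow> distinct v' \<Longrightarrow> set v = set v' \<Longrightarrow> G v = G v' \<Longrightarrow> v = v'"
proof (induction v arbitrary: v')
  case Nil then show ?case by simp
next
  case (Cons b v)
  obtain b' w where v': "v' = b' # w" using Cons.prems by (cases v') auto
  have p: "G (b#v) permutes set (b#v)" using Cons.prems G_permutes by blast
  have "G (b#v) b = G (b#v) b'"
    using G_hd[of "b#v"] G_hd[of v'] Cons.prems v' by simp
  then have bb: "b = b'" using permutes_inj[OF p] by (auto dest: injD)
  have sw: "set v = set w" using Cons.prems v' bb by auto
  have dw: "distinct w" using Cons.prems v' by simp
  show ?case
  proof (cases "\<forall>x\<in>set v. b < x")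
    case True
    then have "G v = G w" using Cons.prems v' bb sw by simp
    then show ?thesis using Cons dw sw v' bb by auto
  next
    case False
    then have ne: "v \<noteq> []" "w \<noteq> []" using sw by auto
    have F2: "\<not> (\<forall>x\<in>set w. b < x)" using False sw by simp
    have G1: "G (b#v) = G v \<circ> transpose (hd v) b" by (simp only: G.simps if_not_P[OF False])
    have "G (b#w) = G w \<circ> transpose (hd w) b" by (simp only: G.simps if_not_P[OF F2])
    then have G2: "G (b#v) = G w \<circ> transpose (hd w) b" using Cons.prems(4) v' bb by metis
    have bv: "b \<notin> set v" "b \<notin> set w" using Cons.prems sw by auto
    have pv: "G v permutes set v" "G w permutes set w" using Cons.prems dw G_permutes by auto
    have "G (b#v) (hd v) = b" using G1 bv pv by (simp add: transpose_def permutes_not_in)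
    moreover have "G (b#v) (hd w) = b" using G2 bv pv by (simp add: transpose_def permutes_not_in)
    ultimately have hh: "hd v = hd w" using permutes_inj[OF p] by (metis injD)
    have "G v = G (b#v) \<circ> transpose (hd v) b" unfolding G1 by (simp only: o_assoc[symmetric] transpose_comp_involutory comp_id)
    moreover have "G w = G (b#v) \<circ> transpose (hd w) b" unfolding G2 by (simp only: o_assoc[symmetric] transpose_comp_involutory comp_id)
    ultimately have "G v = G w" using hh by simp
    then show ?thesis using Cons dw sw v' bb by auto
  qed
qed

definition F :: "nat list \<Rightarrow> nat \<Rightarrow> nat" where "F u = G (rev u)"

lemma F_permutes: "distinct u \<Longrightarrow> F u permutes set u"
  using G_permutes[of "rev u"] by (simp add: F_def)

lemma F_inj: "distinct u \<Longrightarrow> distinct u' \<Longrightarrow> set u = set u' \<Longrightarrow> F u = F u' \<Longrightarrow> u = u'"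
  using G_inj[of "rev u" "rev u'"] by (simp add: F_def)

lemma F_adj: "distinct u \<Longrightarrow> F u a = Suc a \<longleftrightarrow> (\<exists>xs ys. u = xs @ a # Suc a # ys)"
proof -
  assume d: "distinct u"
  have "F u a = Suc a \<longleftrightarrow> adjr (rev u) a" using G_adj[of "rev u" a] d by (simp add: F_def)
  also have "\<dots> \<longleftrightarrow> (\<exists>xs ys. u = xs @ a # Suc a # ys)"
    unfolding adjr_def
    apply (rule iffI)
     apply (metis append.assoc append_Cons rev_append rev_rev_ident rev_singleton_conv append_Nil)
    apply (metis append.assoc append_Cons rev_append rev.simps append_Nil)
    done
  finally show ?thesis .
qed

lemma F_bij: "finite S \<Longrightarrow> bij_betw F (permutations_of_set S) {p. p permutes S}"
proof -
  assume fin: "finite S"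
  have inj: "inj_on F (permutations_of_set S)"
    by (auto intro!: inj_onI F_inj simp: permutations_of_set_def)
  have sub: "F ` permutations_of_set S \<subseteq> {p. p permutes S}"
    using F_permutes by (auto simp: permutations_of_set_def)
  have "card (F ` permutations_of_set S) = card {p. p permutes S}"
    using card_image[OF inj] fin by (simp add: card_permutations)
  then have "F ` permutations_of_set S = {p. p permutes S}"
    using sub fin by (intro card_subset_eq) (auto simp: finite_permutations)
  then show ?thesis using inj by (simp add: bij_betw_def)
qed


definition sgw :: "selem list \<Rightarrow> nat \<Rightarrow> bool" where
  "sgw w j = the (map_of w j)"

definition gw :: "selem list \<Rightarrow> selem \<Rightarrow> selem" where
  "gw w x = (F (map fst w) (fst x) - 1, sgw w (F (map fst w) (fst x)))"

definition Phi :: "selem list \<Rightarrow> selem set \<times> (selem \<Rightarrow> selem)" where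
  "Phi w = (set w, restrict (gw w) (set w))"

lemma sgw_eq: "distinct (map fst w) \<Longrightarrow> (j, b) \<in> set w \<Longrightarrow> sgw w j = b"
  by (simp add: sgw_def)

lemma sgw_mem: "distinct (map fst w) \<Longrightarrow> j \<in> set (map fst w) \<Longrightarrow> (j, sgw w j) \<in> set w"
  by (auto simp: sgw_eq)

lemma w_decomp: "distinct (map fst w) \<Longrightarrow> w = map (\<lambda>i. (i, sgw w i)) (map fst w)"
  proof (rule nth_equalityI)
  fix i assume d: "distinct (map fst w)" and i: "i < length w"
  have "w ! i \<in> set w" using i by simp
  then have "sgw w (fst (w ! i)) = snd (w ! i)" using sgw_eq[OF d, of "fst (w!i)" "snd (w!i)"] by simp
  then show "w ! i = map (\<lambda>i. (i, sgw w i)) (map fst w) ! i" using i by simp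
qed simp

lemma nth_split: "(\<exists>xs ys. u = xs @ a # Suc a # ys) \<longleftrightarrow> (\<exists>j. j + 1 < length u \<and> u ! j = a \<and> u ! (j+1) = Suc a)"
proof
  assume "\<exists>xs ys. u = xs @ a # Suc a # ys"
  then obtain xs ys where "u = xs @ a # Suc a # ys" by blast
  then show "\<exists>j. j + 1 < length u \<and> u ! j = a \<and> u ! (j+1) = Suc a"
    by (intro exI[of _ "length xs"]) (simp add: nth_append)
next
  assume "\<exists>j. j + 1 < length u \<and> u ! j = a \<and> u ! (j+1) = Suc a"
  then obtain j where j: "j + 1 < length u" "u ! j = a" "u ! (j+1) = Suc a" by blast
  have "u = take j u @ u ! j # u ! (j+1) # drop (j+2) u"
    using j(1) by (metis Cons_nth_drop_Suc Suc_eq_plus1 Suc_lessD add_2_eq_Suc' append_take_drop_id)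
  then show "\<exists>xs ys. u = xs @ a # Suc a # ys" using j by metis
qed

lemma Phi_in:
  assumes "rel_derangement_B n w"
  shows "Phi w \<in> signed_skew_derangements n"
proof -
  define u where "u = map fst w"
  define X where "X = set w"
  define \<pi> where "\<pi> = F u"
  have du: "distinct u" and su: "set u = {1..n}" and lw: "length w = n"
    using assms by (auto simp: rel_derangement_B_def signed_perm_def u_def)
  have nos: "\<And>j. j + 1 < length w \<Longrightarrow>
        \<not> (fst (w ! (j+1)) = fst (w ! j) + 1 \<and> snd (w ! (j+1)) = snd (w ! j))"
    using assms by (auto simp: rel_derangement_B_def)
  have p: "\<pi> permutes {1..n}" using F_permutes[OF du] su by (simp add: \<pi>_def)
  have dw: "distinct (map fst w)" using du u_def by simp
  have memX: "\<And>x. x \<in> X \<Longrightarrow> x = (fst x, sgw w (fst x))"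
    using sgw_eq[OF dw] by (auto simp: X_def)
  have inX: "\<And>j. j \<in> {1..n} \<Longrightarrow> (j, sgw w j) \<in> X"
    using sgw_mem[OF dw] su by (auto simp: X_def u_def)
  have fstX: "fst ` X = {1..n}" using su by (simp add: X_def u_def)
  have injX: "inj_on fst X" using dw by (simp add: X_def distinct_map)
  have gwx: "\<And>x. gw w x = (\<pi> (fst x) - 1, sgw w (\<pi> (fst x)))" by (simp add: gw_def \<pi>_def u_def)
  have pin: "\<And>x. x \<in> X \<Longrightarrow> \<pi> (fst x) \<in> {1..n}"
    using fstX p by (metis image_eqI permutes_in_image)
  have inj: "inj_on (gw w) X"
  proof (rule inj_onI)
    fix x y assume xy: "x \<in> X" "y \<in> X" "gw w x = gw w y"
    then have "\<pi> (fst x) - 1 = \<pi> (fst y) - 1" by (simp add: gwx)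
    moreover have "\<pi> (fst x) \<ge> 1" "\<pi> (fst y) \<ge> 1" using pin xy by auto
    ultimately have "\<pi> (fst x) = \<pi> (fst y)" by simp
    then have "fst x = fst y" using permutes_inj[OF p] by (metis injD)
    then show "x = y" using injX xy by (auto dest: inj_onD)
  qed
  have img: "gw w ` X = shift_down X"
  proof
    show "gw w ` X \<subseteq> shift_down X"
    proof
      fix y assume "y \<in> gw w ` X"
      then obtain x where x: "x \<in> X" "y = gw w x" by blast
      have "(\<pi> (fst x), sgw w (\<pi> (fst x))) \<in> X" using inX pin x by blast
      moreover have "y = (\<lambda>(i, y). (i - 1, y)) (\<pi> (fst x), sgw w (\<pi> (fst x)))" using x gwx by simp
      ultimately show "y \<in> shift_down X" unfolding shift_down_def by blast
    qed
  next
    show "shift_down X \<subseteq> gw w ` X"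
    proof
      fix y assume "y \<in> shift_down X"
      then obtain k c where kc: "(k, c) \<in> X" "y = (k - 1, c)" unfolding shift_down_def by auto
      have k: "k \<in> {1..n}" using kc fstX by force
      have c: "c = sgw w k" using memX kc by force
      obtain i where i: "i \<in> {1..n}" "\<pi> i = k" using k permutes_image[OF p] by (metis imageE)
      have "gw w (i, sgw w i) = y" using gwx i kc c by simp
      then show "y \<in> gw w ` X" using inX[OF i(1)] by blast
    qed
  qed
  have nofix: "\<And>x. x \<in> X \<Longrightarrow> gw w x \<noteq> x"
  proof
    fix x assume x: "x \<in> X" and eq: "gw w x = x"
    obtain i b where ib: "x = (i, b)" by (cases x)
    have "\<pi> i - 1 = i" "sgw w (\<pi> i) = b" using eq ib gwx by auto
    moreover have "\<pi> i \<ge> 1" using pin x ib by force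
    ultimately have pi: "\<pi> i = Suc i" by simp
    then have sb: "sgw w (Suc i) = b" using \<open>sgw w (\<pi> i) = b\<close> by simp
    have "\<exists>xs ys. u = xs @ i # Suc i # ys" using F_adj[OF du] pi by (simp add: \<pi>_def)
    then obtain j where j: "j + 1 < length u" "u ! j = i" "u ! (j+1) = Suc i"
      using nth_split by blast
    have lu: "length u = length w" by (simp add: u_def)
    have f1: "fst (w ! j) = i" "fst (w ! (j+1)) = Suc i" using j lu by (auto simp: u_def)
    have "w ! j \<in> X" "w ! (j+1) \<in> X" using j lu by (auto simp: X_def)
    then have "snd (w ! j) = sgw w i" "snd (w ! (j+1)) = sgw w (Suc i)"
      using memX f1 by (metis snd_conv)+
    moreover have "sgw w i = b" using memX x ib by force
    ultimately show False using nos[of j] j lu f1 sb by simp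
  qed
  have "bij_betw (gw w) X (shift_down X)" using inj img by (simp add: bij_betw_def)
  moreover have "signed_set n X" using fstX injX by (simp add: signed_set_def)
  moreover have "\<forall>x\<in>X. restrict (gw w) X x \<noteq> x" using nofix by simp
  ultimately show ?thesis unfolding Phi_def signed_skew_derangements_def X_def by simp
qed

lemma Phi_inj:
  assumes "rel_derangement_B n w" "rel_derangement_B n w'" "Phi w = Phi w'"
  shows "w = w'"
proof -
  define u where "u = map fst w"
  define u' where "u' = map fst w'"
  have du: "distinct u" and su: "set u = {1..n}"
    using assms by (auto simp: rel_derangement_B_def signed_perm_def u_def)
  have du': "distinct u'" and su': "set u' = {1..n}"
    using assms by (auto simp: rel_derangement_B_def signed_perm_def u'_def)
  have dw: "distinct (map fst w)" and dw': "distinct (map fst w')" using du du' u_def u'_def by auto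
  have sX: "set w = set w'" using assms(3) by (simp add: Phi_def)
  have rX: "restrict (gw w) (set w) = restrict (gw w') (set w)" using assms(3) sX by (simp add: Phi_def)
  have sg: "\<And>j. j \<in> {1..n} \<Longrightarrow> sgw w' j = sgw w j"
  proof -
    fix j assume "j \<in> {1..n}"
    then have "(j, sgw w j) \<in> set w'" using sgw_mem[OF dw] su sX u_def by auto
    then show "sgw w' j = sgw w j" using sgw_eq[OF dw'] by blast
  qed
  have p: "F u permutes {1..n}" "F u' permutes {1..n}"
    using F_permutes[OF du] F_permutes[OF du'] su su' by auto
  have "F u = F u'"
  proof
    fix i show "F u i = F u' i"
    proof (cases "i \<in> {1..n}")
      case True
      then have m: "(i, sgw w i) \<in> set w" using sgw_mem[OF dw] su u_def by auto
      have "gw w (i, sgw w i) = gw w' (i, sgw w i)" using fun_cong[OF rX, of "(i, sgw w i)"] m by simp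
      then have "F u i - 1 = F u' i - 1" by (simp add: gw_def u_def u'_def)
      moreover have "F u i \<in> {1..n}" "F u' i \<in> {1..n}" using True permutes_in_image[OF p(1)] permutes_in_image[OF p(2)] by simp_all
      ultimately show ?thesis by auto
    next
      case False
      then show ?thesis using p by (simp add: permutes_not_in)
    qed
  qed
  then have uu: "u = u'" using F_inj[OF du du'] su su' by simp
  have "w = map (\<lambda>i. (i, sgw w i)) u" using w_decomp[OF dw] u_def by simp
  also have "\<dots> = map (\<lambda>i. (i, sgw w' i)) u'" using uu sg su by (auto intro!: map_cong)
  also have "\<dots> = w'" using w_decomp[OF dw'] u'_def by simp
  finally show ?thesis .
qed

lemma Phi_surj:
  assumes "(X, f) \<in> signed_skew_derangements n"
  shows "\<exists>w. rel_derangement_B n w \<and> Phi w = (X, f)"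
proof -
  have fstX: "fst ` X = {1..n}" and injX: "inj_on fst X" and bij: "bij_betw f X (shift_down X)"
    and ext: "f \<in> extensional X" and nofix: "\<forall>x\<in>X. f x \<noteq> x"
    using assms by (auto simp: signed_skew_derangements_def signed_set_def)
  define sg where "sg j = (SOME b. (j, b) \<in> X)" for j
  have inX: "\<And>j. j \<in> {1..n} \<Longrightarrow> (j, sg j) \<in> X"
  proof -
    fix j assume "j \<in> {1..n}"
    then obtain x where "x \<in> X" "fst x = j" using fstX by (metis imageE)
    then have "\<exists>b. (j, b) \<in> X" by (metis prod.collapse)
    then show "(j, sg j) \<in> X" unfolding sg_def by (rule someI_ex)
  qed
  have memX: "\<And>x. x \<in> X \<Longrightarrow> x = (fst x, sg (fst x))"
  proof -
    fix x assume x: "x \<in> X"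
    have "fst x \<in> {1..n}" using x fstX by blast
    then have "(fst x, sg (fst x)) \<in> X" by (rule inX)
    then show "x = (fst x, sg (fst x))" using injX x by (metis fst_conv inj_onD)
  qed
  define p where "p i = (if i \<in> {1..n} then Suc (fst (f (i, sg i))) else i)" for i
  have fp: "\<And>i. i \<in> {1..n} \<Longrightarrow> f (i, sg i) = (p i - 1, sg (p i)) \<and> p i \<in> {1..n}"
  proof -
    fix i assume i: "i \<in> {1..n}"
    have "f (i, sg i) \<in> shift_down X" using bij inX[OF i] by (auto simp: bij_betw_def)
    then obtain k c where kc: "(k, c) \<in> X" "f (i, sg i) = (k - 1, c)" unfolding shift_down_def by auto
    have k: "k \<in> {1..n}" using kc fstX by (metis fst_conv image_eqI)
    have c: "c = sg k" using memX[OF kc(1)] by simp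
    have "p i = k" using i kc k by (simp add: p_def)
    then show "f (i, sg i) = (p i - 1, sg (p i)) \<and> p i \<in> {1..n}" using kc c k by simp
  qed
  have injp: "inj_on p {1..n}"
  proof (rule inj_onI)
    fix i j assume ij: "i \<in> {1..n}" "j \<in> {1..n}" "p i = p j"
    then have "f (i, sg i) = f (j, sg j)" using fp by metis
    then have "(i, sg i) = (j, sg j)" using bij inX ij by (auto simp: bij_betw_def dest: inj_onD)
    then show "i = j" by simp
  qed
  have "p ` {1..n} \<subseteq> {1..n}" using fp by blast
  then have "p ` {1..n} = {1..n}" using injp by (intro endo_inj_surj) simp_all
  then have pp: "p permutes {1..n}"
    using injp by (intro bij_imp_permutes) (auto simp: bij_betw_def p_def)
  obtain u where u: "u \<in> permutations_of_set {1..n}" "F u = p"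
  proof -
    have "p \<in> F ` permutations_of_set {1..n}" using F_bij[of "{1..n::nat}"] pp by (simp add: bij_betw_def)
    then show ?thesis using that by blast
  qed
  have du: "distinct u" and su: "set u = {1..n}" using u by (auto simp: permutations_of_set_def)
  define w where "w = map (\<lambda>i. (i, sg i)) u"
  have mw: "map fst w = u" by (simp add: w_def comp_def)
  have dw: "distinct (map fst w)" using mw du by simp
  have lu: "length u = n" using distinct_card[OF du] su by simp
  have sw: "set w = X"
  proof
    show "set w \<subseteq> X" using inX su by (auto simp: w_def)
    show "X \<subseteq> set w"
    proof
      fix x assume x: "x \<in> X"
      then have "fst x \<in> set u" using su fstX by blast
      then show "x \<in> set w" using memX[OF x] by (auto simp: w_def)
    qed
  qed
  have sgw: "\<And>j. j \<in> {1..n} \<Longrightarrow> sgw w j = sg j"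
    using sgw_eq[OF dw] inX sw by blast
  have rd: "rel_derangement_B n w"
    unfolding rel_derangement_B_def signed_perm_def
  proof (intro conjI allI impI)
    show "length w = n" using lu by (simp add: w_def)
    show "distinct (map fst w)" by (rule dw)
    show "set (map fst w) = {1..n}" using mw su by simp
  next
    fix j assume j: "j + 1 < length w"
    show "\<not> (fst (w ! (j+1)) = fst (w ! j) + 1 \<and> snd (w ! (j+1)) = snd (w ! j))"
    proof
      assume h: "fst (w ! (j+1)) = fst (w ! j) + 1 \<and> snd (w ! (j+1)) = snd (w ! j)"
      define a where "a = u ! j"
      have lw: "length w = length u" by (simp add: w_def)
      have a1: "u ! (j+1) = Suc a" and s1: "sg (Suc a) = sg a"
        using h j lw by (auto simp: w_def a_def)
      have an: "a \<in> {1..n}" using j lw su a_def by (metis Suc_eq_plus1 Suc_lessD nth_mem)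
      have "\<exists>xs ys. u = xs @ a # Suc a # ys" using nth_split j lw a1 a_def by metis
      then have "p a = Suc a" using F_adj[OF du] u(2) by simp
      then have "f (a, sg a) = (a, sg a)" using fp[OF an] s1 by simp
      then show False using nofix inX[OF an] by blast
    qed
  qed
  have "restrict (gw w) X = restrict f X"
  proof (rule restrict_ext)
    fix x assume x: "x \<in> X"
    define i where "i = fst x"
    have i: "i \<in> {1..n}" using x fstX i_def by blast
    have xe: "x = (i, sg i)" using memX[OF x] i_def by simp
    have "gw w x = (p i - 1, sgw w (p i))" using xe mw u(2) by (simp add: gw_def)
    also have "\<dots> = (p i - 1, sg (p i))" using fp[OF i] sgw by simp
    also have "\<dots> = f x" using fp[OF i] xe by simp
    finally show "gw w x = f x" .
  qed
  then have "Phi w = (X, f)" using sw extensional_restrict[OF ext] by (simp add: Phi_def)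
  then show ?thesis using rd by blast
qed

theorem theorem2:
  fixes n :: nat
  assumes "n \<ge> 1"
  shows "\<exists>\<phi>. bij_betw \<phi> (rel_derangements_B n) (signed_skew_derangements n)"
proof (intro exI[of _ Phi] bij_betw_imageI)
  show "inj_on Phi (rel_derangements_B n)"
    by (rule inj_onI) (auto simp: rel_derangements_B_def intro: Phi_inj)
  show "Phi ` rel_derangements_B n = signed_skew_derangements n"
  proof
    show "Phi ` rel_derangements_B n \<subseteq> signed_skew_derangements n"
      using Phi_in by (auto simp: rel_derangements_B_def)
    show "signed_skew_derangements n \<subseteq> Phi ` rel_derangements_B n"
    proof
      fix y assume "y \<in> signed_skew_derangements n"
      then obtain X f where y: "y = (X, f)" "(X, f) \<in> signed_skew_derangements n" by (cases y) auto
      then obtain w where "rel_derangement_B n w" "Phi w = (X, f)" using Phi_surj by blast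
      then have "w \<in> rel_derangements_B n" "Phi w = y" using y by (simp_all add: rel_derangements_B_def)
      then show "y \<in> Phi ` rel_derangements_B n" by (metis imageI)
    qed
  qed
qed

end
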